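(* Let $k_1,\dots,k_i$ be positive integers with $k_1+\dots+k_i=2k$ and let $c=(i_1,j_1),\dots,(i_k,j_k)$ be an oriented chord diagram on $\{1,\dots,2k\}$. Then, as elements of the graph space $\mathcal{G}$ (where $(\Gamma,-\omega)=-(\Gamma,\omega)$): (i) if $\tau=(i_r\ j_r)\in S_{2k}$ for some $1\le r\le k$, then $\Gamma_{k_1,\dots,k_i}(\tau\cdot c)=-\Gamma_{k_1,\dots,k_i}(c)$; (ii) if $\sigma=(\sigma_1,\dots,\sigma_i)\in S_{k_1}\times\dots\times S_{k_i}\subset S_{2k}$ (each $\sigma_r$ permuting the $r$-th consecutive block of $\{1,\dots,2k\}$ of size $k_r$), then $\Gamma_{k_1,\dots,k_i}(\sigma\cdot c)=\Gamma_{k_1,\dots,k_i}(c)$; (iii) if $\sigma\in S_i$, then $\Gamma_{k_{\sigma(1)},\dots,k_{\sigma(i)}}\big((\sigma_{(k_1,\dots,k_i)})^{-1}\cdot c\big)=\operatorname{sgn}(\sigma)\,\Gamma_{k_1,\dots,k_i}(c)$.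
   Context: $S_{2k}$ acts on oriented chord diagrams by $\sigma\cdot((i_1,j_1),\dots,(i_k,j_k))=((\sigma(i_1),\sigma(j_1)),\dots,(\sigma(i_k),\sigma(j_k)))$. For $\sigma\in S_i$, let $B_1,\dots,B_i$ be the consecutive blocks of $\{1,\dots,2k\}$ of sizes $k_1,\dots,k_i$ and $B'_1,\dots,B'_i$ the consecutive blocks of sizes $k_{\sigma(1)},\dots,k_{\sigma(i)}$; $\sigma_{(k_1,\dots,k_i)}\in S_{2k}$ maps the $a$-th element of $B'_t$ to the $a$-th element of $B_{\sigma(t)}$ (the block permutation $V^{\otimes k_1}\otimes\cdots\otimes V^{\otimes k_i}\to V^{\otimes k_{\sigma(1)}}\otimes\cdots\otimes V^{\otimes k_{\sigma(i)}}$). Oriented graph $\Gamma_{k_1,\dots,k_i}(c)$: half-edges $h_1,\dots,h_{2k}$; vertices $\{h_1,\dots,h_{k_1}\},\{h_{k_1+1},\dots,h_{k_1+k_2}\},\dots,\{h_{k_1+\dots+k_{i-1}+1},\dots,h_{2k}\}$; edges $(h_{i_1},h_{j_1}),\dots,(h_{i_k},h_{j_k})$; orientation given by the vertex ordering as listed and the edge orientations as listed. Graphs, orientations and the space $\mathcal{G}$: a graph is a finite set of half-edges with a partition into vertices and a partition into two-element edges; an orientation is a class of (vertex ordering, ordering within each edge) modulo simultaneous changes of total sign $+1$ (sign of the vertex permutation times $(-1)$ per flipped edge); $\mathcal{G}$ is spanned by isomorphism classes of oriented graphs modulo $(\Gamma,-\omega)=-(\Gamma,\omega)$. *)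

theory Defs
  imports "HOL-Combinatorics.Combinatorics"
begin

(* A representative is a pair (V, E):
   V is the list of vertices (each a set of half-edges), the list order being
   the vertex ordering; E is the set of edges, each written as an ordered pair
   (the ordering within the edge). *)
type_synonym ograph = "nat set list \<times> (nat \<times> nat) set"

definition halfedges :: "ograph \<Rightarrow> nat set" where
  "halfedges g = \<Union> (set (fst g))"

definition valid_graph :: "ograph \<Rightarrow> bool" where
  "valid_graph g \<longleftrightarrow>
     (let V = fst g; E = snd g; H = halfedges g in
        (\<forall>v\<in>set V. finite v \<and> v \<noteq> {}) \<and>
        (\<forall>i<length V. \<forall>j<length V. i \<noteq> j \<longrightarrow> V ! i \<inter> V ! j = {}) \<and>
        (\<forall>e\<in>E. fst e \<noteq> snd e \<and> fst e \<in> H \<and> snd e \<in> H) \<and>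
        (\<forall>h\<in>H. \<exists>!e\<in>E. fst e = h \<or> snd e = h))"

(* iso_sign g g' s: there is an isomorphism of underlying graphs g -> g'
   carrying the orientation of g to s times the orientation of g'
   (s = sign of the induced vertex permutation times (-1)^(flipped edges)). *)
definition iso_sign :: "ograph \<Rightarrow> ograph \<Rightarrow> rat \<Rightarrow> bool" where
  "iso_sign g g' s \<longleftrightarrow> valid_graph g \<and> valid_graph g' \<and>
     length (fst g') = length (fst g) \<and>
     (\<exists>f \<pi>. bij_betw f (halfedges g) (halfedges g') \<and>
        \<pi> permutes {..<length (fst g)} \<and>
        (\<forall>i<length (fst g). f ` (fst g ! i) = fst g' ! \<pi> i) \<and>
        (\<forall>e\<in>snd g. (f (fst e), f (snd e)) \<in> snd g' \<or> (f (snd e), f (fst e)) \<in> snd g') \<and>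
        s = of_int (sign \<pi>) * (-1) ^ card {e\<in>snd g. (f (snd e), f (fst e)) \<in> snd g'})"

definition delta :: "ograph \<Rightarrow> ograph \<Rightarrow> rat" where
  "delta g x = (if x = g then 1 else 0)"

(* The relations defining the graph space: G = Q<representatives> / Grel.
   Identifying [g] = s [g'] whenever iso_sign g g' s covers both passing to
   isomorphism classes of oriented graphs (s = 1) and (G,-w) = -(G,w). *)
inductive_set Grel :: "(ograph \<Rightarrow> rat) set" where
  zero: "(\<lambda>_. 0) \<in> Grel"
| gen: "iso_sign g g' s \<Longrightarrow> (\<lambda>x. delta g x - s * delta g' x) \<in> Grel"
| add: "a \<in> Grel \<Longrightarrow> b \<in> Grel \<Longrightarrow> (\<lambda>x. a x + b x) \<in> Grel"
| smult: "a \<in> Grel \<Longrightarrow> (\<lambda>x. r * a x) \<in> Grel"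

definition G_eq :: "ograph \<Rightarrow> rat \<Rightarrow> ograph \<Rightarrow> bool" where
  "G_eq g s h \<longleftrightarrow> (\<lambda>x. delta g x - s * delta h x) \<in> Grel"

definition chord_diagram :: "nat \<Rightarrow> (nat \<times> nat) list \<Rightarrow> bool" where
  "chord_diagram k c \<longleftrightarrow> length c = k \<and>
     distinct (concat (map (\<lambda>(a, b). [a, b]) c)) \<and>
     set (concat (map (\<lambda>(a, b). [a, b]) c)) = {1..2 * k}"

definition act :: "(nat \<Rightarrow> nat) \<Rightarrow> (nat \<times> nat) list \<Rightarrow> (nat \<times> nat) list" where
  "act \<sigma> c = map (\<lambda>(a, b). (\<sigma> a, \<sigma> b)) c"

(* start of the t-th consecutive block (0-based t) and the block itself *)
definition bstart :: "nat list \<Rightarrow> nat \<Rightarrow> nat" where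
  "bstart ks t = sum_list (take t ks)"

definition block :: "nat list \<Rightarrow> nat \<Rightarrow> nat set" where
  "block ks t = {bstart ks t + 1 .. bstart ks t + ks ! t}"

(* Gamma_{k_1,...,k_i}(c): half-edge h_j is the number j *)
definition Gamma :: "nat list \<Rightarrow> (nat \<times> nat) list \<Rightarrow> ograph" where
  "Gamma ks c = (map (block ks) [0..<length ks], set c)"

(* sigma_{(k_1,...,k_i)}: the a-th element of block t of (k_sigma(1),...,k_sigma(i))
   goes to the a-th element of block sigma(t) of (k_1,...,k_i); identity elsewhere. *)
definition block_perm :: "nat list \<Rightarrow> (nat \<Rightarrow> nat) \<Rightarrow> nat \<Rightarrow> nat" where
  "block_perm ks \<sigma> x =
     (let ks' = permute_list \<sigma> ks in
      if \<exists>t a. t < length ks \<and> a < ks' ! t \<and> x = bstart ks' t + a + 1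
      then (let (t, a) = (THE (t, a). t < length ks \<and> a < ks' ! t \<and> x = bstart ks' t + a + 1)
            in bstart ks (\<sigma> t) + a + 1)
      else x)"

end

theory Submission
  imports Defs
begin


lemma bstart_Suc: "t < length ks \<Longrightarrow> bstart ks (Suc t) = bstart ks t + ks!t"
  by (simp add: bstart_def take_Suc_conv_app_nth)

lemma bstart_mono: "t \<le> t' \<Longrightarrow> bstart ks t \<le> bstart ks t'"
proof -
  assume "t \<le> t'"
  then obtain d where "t' = t + d" using le_Suc_ex by blast
  then show ?thesis by (simp add: bstart_def take_add)
qed

lemma bstart_le_sum: "t < length ks \<Longrightarrow> bstart ks t + ks!t \<le> sum_list ks"
proof -
  assume a: "t < length ks"
  have "bstart ks (Suc t) \<le> bstart ks (length ks)" using a by (intro bstart_mono) simp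
  moreover have "bstart ks (length ks) = sum_list ks" by (simp add: bstart_def)
  ultimately show ?thesis using a bstart_Suc[OF a] by linarith
qed

lemma block_uniq:
  assumes "t < length ks" "a < ks!t" "t' < length ks" "a' < ks!t'"
    "bstart ks t + a = bstart ks t' + a'"
  shows "t = t' \<and> a = a'"
proof -
  have "\<not> t < t'"
  proof
    assume "t < t'"
    then have "bstart ks (Suc t) \<le> bstart ks t'" by (intro bstart_mono) simp
    then show False using assms bstart_Suc[of t ks] by simp
  qed
  moreover have "\<not> t' < t"
  proof
    assume "t' < t"
    then have "bstart ks (Suc t') \<le> bstart ks t" by (intro bstart_mono) simp
    then show False using assms bstart_Suc[of t' ks] by simp
  qed
  ultimately show ?thesis using assms by simp
qed

lemma block_exists:
  "1 \<le> x \<Longrightarrow> x \<le> sum_list ks \<Longrightarrow> \<exists>t a. t < length ks \<and> a < ks!t \<and> x = bstart ks t + a + 1"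
proof (induction ks arbitrary: x)
  case Nil then show ?case by simp
next
  case (Cons m ks)
  show ?case
  proof (cases "x \<le> m")
    case True
    then show ?thesis using Cons.prems
      by (intro exI[of _ 0] exI[of _ "x - 1"]) (auto simp: bstart_def)
  next
    case False
    have "\<exists>t a. t < length ks \<and> a < ks!t \<and> x - m = bstart ks t + a + 1"
      using Cons.IH[of "x - m"] Cons.prems False by auto
    then obtain t a where "t < length ks" "a < ks!t" "x - m = bstart ks t + a + 1" by blast
    then show ?thesis using False
      by (intro exI[of _ "Suc t"] exI[of _ a]) (auto simp: bstart_def)
  qed
qed

lemma block_eq_image: "block ks t = (\<lambda>a. bstart ks t + a + 1) ` {..<ks!t}"
proof -
  have "x \<in> (\<lambda>a. bstart ks t + a + 1) ` {..<ks!t}" if "x \<in> block ks t" for x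
    using that by (auto simp: block_def image_iff intro!: bexI[of _ "x - bstart ks t - 1"])
  then show ?thesis by (auto simp: block_def)
qed

lemma union_blocks: "(\<Union>t\<in>{..<length ks}. block ks t) = {1..sum_list ks}"
proof
  show "(\<Union>t\<in>{..<length ks}. block ks t) \<subseteq> {1..sum_list ks}"
    using bstart_le_sum by (force simp: block_def)
  show "{1..sum_list ks} \<subseteq> (\<Union>t\<in>{..<length ks}. block ks t)"
  proof
    fix x assume "x \<in> {1..sum_list ks}"
    then obtain t a where "t < length ks" "a < ks!t" "x = bstart ks t + a + 1"
      using block_exists[of x ks] by auto
    then show "x \<in> (\<Union>t\<in>{..<length ks}. block ks t)" by (auto simp: block_def intro!: bexI[of _ t])
  qed
qed

lemma halfedges_Gamma: "halfedges (Gamma ks c) = {1..sum_list ks}"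
  unfolding halfedges_def Gamma_def using union_blocks[of ks]
  by (simp add: atLeast0LessThan)

lemma chord_concat: "set (concat (map (\<lambda>(a, b). [a, b]) c)) = (\<Union>(a,b)\<in>set c. {a,b})"
  by (induction c) auto

lemma chord_basic:
  assumes "chord_diagram k c" "e \<in> set c"
  shows "fst e \<noteq> snd e \<and> fst e \<in> {1..2*k} \<and> snd e \<in> {1..2*k}"
proof -
  have d: "distinct (concat (map (\<lambda>(a, b). [a, b]) c))" using assms(1) by (simp add: chord_diagram_def)
  have "(\<lambda>(a, b). [a, b]) e \<in> set (map (\<lambda>(a, b). [a, b]) c)" using assms(2) by auto
  then have "distinct ((\<lambda>(a, b). [a, b]) e)" using d by (simp add: distinct_concat_iff)
  moreover have "fst e \<in> {1..2*k} \<and> snd e \<in> {1..2*k}"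
    using assms chord_concat[of c] unfolding chord_diagram_def by (cases e) fastforce
  ultimately show ?thesis by (cases e) auto
qed

lemma chord_disj:
  assumes "chord_diagram k c" "e \<in> set c" "e' \<in> set c" "h \<in> {fst e, snd e}" "h \<in> {fst e', snd e'}"
  shows "e = e'"
proof (rule ccontr)
  assume ne: "e \<noteq> e'"
  have d: "distinct (concat (map (\<lambda>(a, b). [a, b]) c))" using assms(1) by (simp add: chord_diagram_def)
  have "(\<lambda>(a, b). [a, b]) e \<noteq> (\<lambda>(a, b). [a, b]) e'" using ne by (cases e, cases e') auto
  moreover have "(\<lambda>(a, b). [a, b]) e \<in> set (map (\<lambda>(a, b). [a, b]) c)"
    "(\<lambda>(a, b). [a, b]) e' \<in> set (map (\<lambda>(a, b). [a, b]) c)" using assms(2,3) by auto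
  ultimately have "set ((\<lambda>(a, b). [a, b]) e) \<inter> set ((\<lambda>(a, b). [a, b]) e') = {}"
    using d unfolding distinct_concat_iff by blast
  then show False using assms(4,5) by (cases e, cases e') auto
qed

lemma valid_Gamma:
  assumes pos: "\<forall>x\<in>set ks. 0 < x" and total: "sum_list ks = 2 * k" and ch: "chord_diagram k c"
  shows "valid_graph (Gamma ks c)"
proof -
  have H: "halfedges (Gamma ks c) = {1..2*k}" using halfedges_Gamma total by simp
  have 1: "\<forall>v\<in>set (fst (Gamma ks c)). finite v \<and> v \<noteq> {}"
    using pos nth_mem by (fastforce simp: Gamma_def block_def)
  have 2: "\<forall>i<length (fst (Gamma ks c)). \<forall>j<length (fst (Gamma ks c)). i \<noteq> j \<longrightarrow>
       fst (Gamma ks c) ! i \<inter> fst (Gamma ks c) ! j = {}"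
  proof (intro allI impI)
    fix i j assume ij: "i < length (fst (Gamma ks c))" "j < length (fst (Gamma ks c))" "i \<noteq> j"
    show "fst (Gamma ks c) ! i \<inter> fst (Gamma ks c) ! j = {}"
    proof (rule ccontr)
      assume "fst (Gamma ks c) ! i \<inter> fst (Gamma ks c) ! j \<noteq> {}"
      then obtain x where xi: "x \<in> block ks i" and xj: "x \<in> block ks j" using ij by (auto simp: Gamma_def)
      obtain a where "a < ks!i" "x = bstart ks i + a + 1" using xi unfolding block_eq_image by auto
      moreover obtain b where "b < ks!j" "x = bstart ks j + b + 1" using xj unfolding block_eq_image by auto
      ultimately show False using block_uniq[of i ks a j b] ij by (auto simp: Gamma_def)
    qed
  qed
  have 3: "\<forall>e\<in>snd (Gamma ks c). fst e \<noteq> snd e \<and> fst e \<in> halfedges (Gamma ks c) \<and> snd e \<in> halfedges (Gamma ks c)"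
    using chord_basic[OF ch] H by (simp add: Gamma_def)
  have 4: "\<forall>h\<in>halfedges (Gamma ks c). \<exists>!e\<in>snd (Gamma ks c). fst e = h \<or> snd e = h"
  proof
    fix h assume "h \<in> halfedges (Gamma ks c)"
    moreover have "(\<Union>(a,b)\<in>set c. {a,b}) = {1..2*k}" using ch chord_concat[of c] unfolding chord_diagram_def by simp
    ultimately have "h \<in> (\<Union>(a,b)\<in>set c. {a,b})" using H by simp
    then obtain e where e: "e \<in> set c" "fst e = h \<or> snd e = h" by auto
    show "\<exists>!e\<in>snd (Gamma ks c). fst e = h \<or> snd e = h"
    proof (rule ex1I[of _ e])
      show "e \<in> snd (Gamma ks c) \<and> (fst e = h \<or> snd e = h)" using e by (simp add: Gamma_def)
      fix e' assume "e' \<in> snd (Gamma ks c) \<and> (fst e' = h \<or> snd e' = h)"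
      then show "e' = e" using chord_disj[OF ch, of e' e h] e by (auto simp: Gamma_def)
    qed
  qed
  show ?thesis using 1 2 3 4 unfolding valid_graph_def Let_def by blast
qed

lemma act_concat: "concat (map (\<lambda>(a, b). [a, b]) (act p c)) = map p (concat (map (\<lambda>(a, b). [a, b]) c))"
  by (induction c) (auto simp: act_def)

lemma chord_act:
  assumes "chord_diagram k c" "p permutes {1..2*k}"
  shows "chord_diagram k (act p c)"
proof -
  have "inj p" using assms(2) permutes_inj by blast
  then show ?thesis using assms permutes_image[OF assms(2)]
    unfolding chord_diagram_def act_concat
    by (auto simp: act_def distinct_map inj_on_subset[of p UNIV])
qed



lemma iso_G_eq:
  assumes "valid_graph g" "valid_graph g'" "length (fst g') = length (fst g)"
    "bij_betw f (halfedges g) (halfedges g')" "\<pi> permutes {..<length (fst g)}"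
    "\<forall>i<length (fst g). f ` (fst g ! i) = fst g' ! \<pi> i"
    "\<forall>e\<in>snd g. (f (fst e), f (snd e)) \<in> snd g' \<or> (f (snd e), f (fst e)) \<in> snd g'"
    "s = of_int (sign \<pi>) * (-1) ^ card {e\<in>snd g. (f (snd e), f (fst e)) \<in> snd g'}"
  shows "G_eq g s g'"
proof -
  have "iso_sign g g' s"
    unfolding iso_sign_def
    apply (intro conjI) apply (fact assms(1)) apply (fact assms(2)) apply (fact assms(3))
    apply (rule exI[of _ f], rule exI[of _ \<pi>]) apply (intro conjI) by (fact assms)+
  then show ?thesis unfolding G_eq_def by (rule Grel.gen)
qed

lemma no_rev:
  assumes "chord_diagram k c" "(a,b) \<in> set c" "(b,a) \<in> set c"
  shows False
proof -
  have "(a,b) = (b,a)" by (rule chord_disj[OF assms(1,2,3), of a]) simp_all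
  then have "a = b" by (metis prod.inject)
  moreover have "fst (a,b) \<noteq> snd (a,b)" using chord_basic[OF assms(1,2)] by blast
  ultimately show False by simp
qed

lemma part1:
  assumes pos: "\<forall>x\<in>set ks. 0 < x" and total: "sum_list ks = 2 * k" and ch: "chord_diagram k c"
    and r: "r < k"
  shows "G_eq (Gamma ks (act (transpose (fst (c ! r)) (snd (c ! r))) c)) (-1) (Gamma ks c)"
proof -
  define i where "i = fst (c ! r)"
  define j where "j = snd (c ! r)"
  define \<tau> where "\<tau> = transpose i j"
  have cr: "(i,j) \<in> set c" using r ch by (auto simp: chord_diagram_def i_def j_def)
  have ij: "i \<noteq> j" "i \<in> {1..2*k}" "j \<in> {1..2*k}" using chord_basic[OF ch cr] by auto
  have tp: "\<tau> permutes {1..2*k}" unfolding \<tau>_def using ij by (intro permutes_swap_id)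
  have v1: "valid_graph (Gamma ks (act \<tau> c))" using valid_Gamma[OF pos total chord_act[OF ch tp]] .
  have v2: "valid_graph (Gamma ks c)" using valid_Gamma[OF pos total ch] .
  have other: "\<tau> a = a \<and> \<tau> b = b" if "(a,b) \<in> set c" "(a,b) \<noteq> (i,j)" for a b
  proof -
    have X: "h \<in> {a,b} \<Longrightarrow> h \<in> {i,j} \<Longrightarrow> False" for h
      using chord_disj[OF ch that(1) cr, of h, unfolded fst_conv snd_conv] that(2) by blast
    have "a \<noteq> i" "a \<noteq> j" "b \<noteq> i" "b \<noteq> j" using X by blast+
    then show ?thesis by (simp add: \<tau>_def)
  qed
  have edges: "\<forall>e\<in>snd (Gamma ks (act \<tau> c)). (id (fst e), id (snd e)) \<in> snd (Gamma ks c) \<or> (id (snd e), id (fst e)) \<in> snd (Gamma ks c)"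
  proof
    fix e assume "e \<in> snd (Gamma ks (act \<tau> c))"
    then obtain a b where ab: "(a,b) \<in> set c" "e = (\<tau> a, \<tau> b)" by (auto simp: Gamma_def act_def)
    show "(id (fst e), id (snd e)) \<in> snd (Gamma ks c) \<or> (id (snd e), id (fst e)) \<in> snd (Gamma ks c)"
    proof (cases "(a,b) = (i,j)")
      case True then show ?thesis using ab cr by (auto simp: Gamma_def \<tau>_def)
    next
      case False then show ?thesis using ab other[OF ab(1)] by (auto simp: Gamma_def)
    qed
  qed
  have flip: "{e\<in>snd (Gamma ks (act \<tau> c)). (id (snd e), id (fst e)) \<in> snd (Gamma ks c)} = {(j,i)}"
  proof
    show "{(j,i)} \<subseteq> {e\<in>snd (Gamma ks (act \<tau> c)). (id (snd e), id (fst e)) \<in> snd (Gamma ks c)}"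
    proof -
      have "(\<tau> i, \<tau> j) \<in> set (act \<tau> c)" unfolding act_def set_map using cr by (rule rev_image_eqI) simp
      moreover have "\<tau> i = j" "\<tau> j = i" by (simp_all add: \<tau>_def)
      ultimately show ?thesis using cr by (simp add: Gamma_def)
    qed
    show "{e\<in>snd (Gamma ks (act \<tau> c)). (id (snd e), id (fst e)) \<in> snd (Gamma ks c)} \<subseteq> {(j,i)}"
    proof
      fix e assume e: "e \<in> {e\<in>snd (Gamma ks (act \<tau> c)). (id (snd e), id (fst e)) \<in> snd (Gamma ks c)}"
      then obtain a b where ab: "(a,b) \<in> set c" "e = (\<tau> a, \<tau> b)" by (auto simp: Gamma_def act_def)
      show "e \<in> {(j,i)}"
      proof (cases "(a,b) = (i,j)")
        case True then show ?thesis using ab by (auto simp: \<tau>_def)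
      next
        case False
        then have "(b,a) \<in> set c" using e ab other[OF ab(1)] by (auto simp: Gamma_def)
        then show ?thesis using no_rev[OF ch ab(1)] by blast
      qed
    qed
  qed
  have "G_eq (Gamma ks (act \<tau> c)) (-1) (Gamma ks c)"
  proof (rule iso_G_eq[OF v1 v2, where f = id and \<pi> = id])
    show "bij_betw id (halfedges (Gamma ks (act \<tau> c))) (halfedges (Gamma ks c))"
      by (simp add: halfedges_Gamma)
    show "length (fst (Gamma ks c)) = length (fst (Gamma ks (act \<tau> c)))" by (simp add: Gamma_def)
    show "id permutes {..<length (fst (Gamma ks (act \<tau> c)))}" by (rule permutes_id)
    show "\<forall>i<length (fst (Gamma ks (act \<tau> c))). id ` (fst (Gamma ks (act \<tau> c)) ! i) = fst (Gamma ks c) ! id i"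
      by (simp add: Gamma_def)
    show "\<forall>e\<in>snd (Gamma ks (act \<tau> c)). (id (fst e), id (snd e)) \<in> snd (Gamma ks c) \<or> (id (snd e), id (fst e)) \<in> snd (Gamma ks c)"
      by (rule edges)
    show "- 1 = rat_of_int (sign id) * (- 1) ^ card {e \<in> snd (Gamma ks (act \<tau> c)). (id (snd e), id (fst e)) \<in> snd (Gamma ks c)}"
      unfolding flip by simp
  qed
  then show ?thesis by (simp add: \<tau>_def i_def j_def)
qed

lemma part2:
  assumes pos: "\<forall>x\<in>set ks. 0 < x" and total: "sum_list ks = 2 * k" and ch: "chord_diagram k c"
    and sp: "\<sigma> permutes {1..2 * k}" and bl: "\<forall>t<length ks. \<sigma> ` block ks t = block ks t"
  shows "G_eq (Gamma ks (act \<sigma> c)) 1 (Gamma ks c)"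
proof -
  have v1: "valid_graph (Gamma ks (act \<sigma> c))" using valid_Gamma[OF pos total chord_act[OF ch sp]] .
  have v2: "valid_graph (Gamma ks c)" using valid_Gamma[OF pos total ch] .
  have inv: "inv \<sigma> (\<sigma> x) = x" for x using permutes_inverses(2)[OF sp] .
  have bij: "bij_betw (inv \<sigma>) (halfedges (Gamma ks (act \<sigma> c))) (halfedges (Gamma ks c))"
    using permutes_imp_bij[OF permutes_inv[OF sp]] by (simp add: halfedges_Gamma total)
  have vert: "\<forall>i<length (fst (Gamma ks (act \<sigma> c))). inv \<sigma> ` (fst (Gamma ks (act \<sigma> c)) ! i) = fst (Gamma ks c) ! id i"
  proof (intro allI impI)
    fix i assume "i < length (fst (Gamma ks (act \<sigma> c)))"
    then have "i < length ks" by (simp add: Gamma_def)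
    then have "inv \<sigma> ` block ks i = inv \<sigma> ` \<sigma> ` block ks i" using bl by simp
    also have "\<dots> = block ks i" using inv by (simp add: image_image)
    finally show "inv \<sigma> ` (fst (Gamma ks (act \<sigma> c)) ! i) = fst (Gamma ks c) ! id i"
      using \<open>i < length ks\<close> by (simp add: Gamma_def)
  qed
  have edges: "\<forall>e\<in>snd (Gamma ks (act \<sigma> c)). (inv \<sigma> (fst e), inv \<sigma> (snd e)) \<in> snd (Gamma ks c) \<or> (inv \<sigma> (snd e), inv \<sigma> (fst e)) \<in> snd (Gamma ks c)"
    using inv by (auto simp: Gamma_def act_def)
  have flip: "{e\<in>snd (Gamma ks (act \<sigma> c)). (inv \<sigma> (snd e), inv \<sigma> (fst e)) \<in> snd (Gamma ks c)} = {}"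
  proof -
    have False if e: "e \<in> snd (Gamma ks (act \<sigma> c))" "(inv \<sigma> (snd e), inv \<sigma> (fst e)) \<in> snd (Gamma ks c)" for e
    proof -
      obtain a b where ab: "(a,b) \<in> set c" "e = (\<sigma> a, \<sigma> b)" using e(1) by (auto simp: Gamma_def act_def)
      then have "(b,a) \<in> set c" using e(2) by (simp add: inv Gamma_def)
      then show False using no_rev[OF ch ab(1)] by blast
    qed
    then show ?thesis by blast
  qed
  show ?thesis
    by (rule iso_G_eq[OF v1 v2 _ bij permutes_id vert edges]) (simp_all only: flip, simp_all add: Gamma_def)
qed



lemma pl_props:
  fixes ks :: "nat list"
  assumes sp: "\<sigma> permutes {..<length ks}"
  shows "length (permute_list \<sigma> ks) = length ks"
    "sum_list (permute_list \<sigma> ks) = sum_list ks"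
    "set (permute_list \<sigma> ks) = set ks"
    "\<And>t. t < length ks \<Longrightarrow> permute_list \<sigma> ks ! t = ks ! \<sigma> t"
proof -
  show "length (permute_list \<sigma> ks) = length ks" by simp
  show "sum_list (permute_list \<sigma> ks) = sum_list ks"
    by (simp only: sum_mset_sum_list[symmetric] mset_permute_list[OF sp])
  show "set (permute_list \<sigma> ks) = set ks" using sp by simp
  show "\<And>t. t < length ks \<Longrightarrow> permute_list \<sigma> ks ! t = ks ! \<sigma> t"
    using permute_list_nth[OF sp] by blast
qed

lemma bp_val:
  assumes sp: "\<sigma> permutes {..<length ks}" and t: "t < length ks" and a: "a < ks ! \<sigma> t"
  shows "block_perm ks \<sigma> (bstart (permute_list \<sigma> ks) t + a + 1) = bstart ks (\<sigma> t) + a + 1"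
proof -
  note P = pl_props[OF sp]
  have ex: "\<exists>t' a'. t' < length ks \<and> a' < permute_list \<sigma> ks ! t' \<and>
      bstart (permute_list \<sigma> ks) t + a + 1 = bstart (permute_list \<sigma> ks) t' + a' + 1"
    using t a P(4)[OF t] by auto
  have the: "(THE (t', a'). t' < length ks \<and> a' < permute_list \<sigma> ks ! t' \<and>
      bstart (permute_list \<sigma> ks) t + a + 1 = bstart (permute_list \<sigma> ks) t' + a' + 1) = (t, a)"
  proof (rule the_equality)
    show "case (t, a) of (t', a') \<Rightarrow> t' < length ks \<and> a' < permute_list \<sigma> ks ! t' \<and>
      bstart (permute_list \<sigma> ks) t + a + 1 = bstart (permute_list \<sigma> ks) t' + a' + 1"
      using t a P(4)[OF t] by simp
    fix p assume "case p of (t', a') \<Rightarrow> t' < length ks \<and> a' < permute_list \<sigma> ks ! t' \<and>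
      bstart (permute_list \<sigma> ks) t + a + 1 = bstart (permute_list \<sigma> ks) t' + a' + 1"
    then obtain t' a' where p: "p = (t', a')" "t' < length ks" "a' < permute_list \<sigma> ks ! t'"
      "bstart (permute_list \<sigma> ks) t + a = bstart (permute_list \<sigma> ks) t' + a'"
      by (cases p) auto
    have "t = t' \<and> a = a'"
      using block_uniq[of t "permute_list \<sigma> ks" a t' a'] p t a P(1) P(4)[OF t] by simp
    then show "p = (t, a)" using p by simp
  qed
  show ?thesis unfolding block_perm_def Let_def
    by (simp only: if_P[OF ex] the) simp
qed

lemma bp_out:
  assumes sp: "\<sigma> permutes {..<length ks}" and x: "x \<notin> {1..sum_list ks}"
  shows "block_perm ks \<sigma> x = x"
proof -
  note P = pl_props[OF sp]
  have "\<not> (\<exists>t a. t < length ks \<and> a < permute_list \<sigma> ks ! t \<and> x = bstart (permute_list \<sigma> ks) t + a + 1)"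
  proof
    assume "\<exists>t a. t < length ks \<and> a < permute_list \<sigma> ks ! t \<and> x = bstart (permute_list \<sigma> ks) t + a + 1"
    then obtain t a where ta: "t < length ks" "a < permute_list \<sigma> ks ! t" "x = bstart (permute_list \<sigma> ks) t + a + 1"
      by blast
    have "bstart (permute_list \<sigma> ks) t + permute_list \<sigma> ks ! t \<le> sum_list ks"
      using bstart_le_sum[of t "permute_list \<sigma> ks"] ta(1) P(1,2) by simp
    then show False using ta x by simp
  qed
  then show ?thesis unfolding block_perm_def Let_def by (simp only: if_not_P) simp
qed

lemma bp_block:
  assumes sp: "\<sigma> permutes {..<length ks}" and t: "t < length ks"
  shows "block_perm ks \<sigma> ` block (permute_list \<sigma> ks) t = block ks (\<sigma> t)"
proof -
  note P = pl_props[OF sp]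
  have "block_perm ks \<sigma> ` block (permute_list \<sigma> ks) t
      = (\<lambda>a. block_perm ks \<sigma> (bstart (permute_list \<sigma> ks) t + a + 1)) ` {..<ks ! \<sigma> t}"
    unfolding block_eq_image[of "permute_list \<sigma> ks"] image_image P(4)[OF t] ..
  also have "\<dots> = (\<lambda>a. bstart ks (\<sigma> t) + a + 1) ` {..<ks ! \<sigma> t}"
    by (rule image_cong) (simp, metis bp_val[OF sp t] lessThan_iff)
  also have "\<dots> = block ks (\<sigma> t)" by (simp add: block_eq_image)
  finally show ?thesis .
qed

lemma bp_perm:
  assumes sp: "\<sigma> permutes {..<length ks}"
  shows "block_perm ks \<sigma> permutes {1..sum_list ks}"
proof -
  note P = pl_props[OF sp]
  have "block_perm ks \<sigma> ` {1..sum_list ks} = block_perm ks \<sigma> ` (\<Union>t\<in>{..<length ks}. block (permute_list \<sigma> ks) t)"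
    using union_blocks[of "permute_list \<sigma> ks"] P(1,2) by simp
  also have "\<dots> = (\<Union>t\<in>{..<length ks}. block ks (\<sigma> t))"
    using bp_block[OF sp] by (simp add: image_UN)
  also have "\<dots> = (\<Union>s\<in>\<sigma> ` {..<length ks}. block ks s)" by (simp add: image_image)
  also have "\<dots> = {1..sum_list ks}" using permutes_image[OF sp] union_blocks[of ks] by simp
  finally have im: "block_perm ks \<sigma> ` {1..sum_list ks} = {1..sum_list ks}" .
  have "inj_on (block_perm ks \<sigma>) {1..sum_list ks}"
    by (rule finite_surj_inj) (simp, rule equalityD2[OF im])
  then have "bij_betw (block_perm ks \<sigma>) {1..sum_list ks} {1..sum_list ks}"
    using im by (simp add: bij_betw_def)
  then show ?thesis by (rule bij_imp_permutes) (rule bp_out[OF sp])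
qed

lemma part3:
  assumes pos: "\<forall>x\<in>set ks. 0 < x" and total: "sum_list ks = 2 * k" and ch: "chord_diagram k c"
    and sp: "\<sigma> permutes {..<length ks}"
  shows "G_eq (Gamma (permute_list \<sigma> ks) (act (inv (block_perm ks \<sigma>)) c)) (of_int (sign \<sigma>)) (Gamma ks c)"
proof -
  note P = pl_props[OF sp]
  define \<beta> where "\<beta> = block_perm ks \<sigma>"
  define ks' where "ks' = permute_list \<sigma> ks"
  have bp: "\<beta> permutes {1..2*k}" using bp_perm[OF sp] total by (simp add: \<beta>_def)
  have v1: "valid_graph (Gamma ks' (act (inv \<beta>) c))"
    using valid_Gamma[of ks' k, OF _ _ chord_act[OF ch permutes_inv[OF bp]]] pos total P
    by (simp add: ks'_def)
  have v2: "valid_graph (Gamma ks c)" using valid_Gamma[OF pos total ch] .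
  have inv: "\<beta> (inv \<beta> x) = x" for x using permutes_inverses(1)[OF bp] .
  have bij: "bij_betw \<beta> (halfedges (Gamma ks' (act (inv \<beta>) c))) (halfedges (Gamma ks c))"
    using permutes_imp_bij[OF bp] P(2) total by (simp add: halfedges_Gamma ks'_def)
  have len: "length (fst (Gamma ks' (act (inv \<beta>) c))) = length ks" by (simp add: Gamma_def ks'_def)
  have vert: "\<forall>i<length (fst (Gamma ks' (act (inv \<beta>) c))). \<beta> ` (fst (Gamma ks' (act (inv \<beta>) c)) ! i) = fst (Gamma ks c) ! \<sigma> i"
  proof (intro allI impI)
    fix i assume "i < length (fst (Gamma ks' (act (inv \<beta>) c)))"
    then have i: "i < length ks" using len by simp
    then have si: "\<sigma> i < length ks" using permutes_in_image[OF sp] by simp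
    have "\<beta> ` (fst (Gamma ks' (act (inv \<beta>) c)) ! i) = \<beta> ` block ks' i"
      using i by (simp add: Gamma_def ks'_def)
    also have "\<dots> = block ks (\<sigma> i)" unfolding \<beta>_def ks'_def by (rule bp_block[OF sp i])
    also have "\<dots> = fst (Gamma ks c) ! \<sigma> i" using si by (simp add: Gamma_def)
    finally show "\<beta> ` (fst (Gamma ks' (act (inv \<beta>) c)) ! i) = fst (Gamma ks c) ! \<sigma> i" .
  qed
  have edges: "\<forall>e\<in>snd (Gamma ks' (act (inv \<beta>) c)). (\<beta> (fst e), \<beta> (snd e)) \<in> snd (Gamma ks c) \<or> (\<beta> (snd e), \<beta> (fst e)) \<in> snd (Gamma ks c)"
    using inv by (auto simp: Gamma_def act_def)
  have flip: "{e\<in>snd (Gamma ks' (act (inv \<beta>) c)). (\<beta> (snd e), \<beta> (fst e)) \<in> snd (Gamma ks c)} = {}"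
  proof -
    have False if e: "e \<in> snd (Gamma ks' (act (inv \<beta>) c))" "(\<beta> (snd e), \<beta> (fst e)) \<in> snd (Gamma ks c)" for e
    proof -
      obtain a b where ab: "(a,b) \<in> set c" "e = (inv \<beta> a, inv \<beta> b)" using e(1) by (auto simp: Gamma_def act_def)
      then have "(b,a) \<in> set c" using e(2) by (simp add: inv Gamma_def)
      then show False using no_rev[OF ch ab(1)] by blast
    qed
    then show ?thesis by blast
  qed
  have "G_eq (Gamma ks' (act (inv \<beta>) c)) (of_int (sign \<sigma>)) (Gamma ks c)"
  proof (rule iso_G_eq[OF v1 v2 _ bij _ vert edges])
    show "length (fst (Gamma ks c)) = length (fst (Gamma ks' (act (inv \<beta>) c)))"
      using len by (simp add: Gamma_def)
    show "\<sigma> permutes {..<length (fst (Gamma ks' (act (inv \<beta>) c)))}" using sp len by simp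
    show "rat_of_int (sign \<sigma>) = rat_of_int (sign \<sigma>) * (- 1) ^ card {e \<in> snd (Gamma ks' (act (inv \<beta>) c)). (\<beta> (snd e), \<beta> (fst e)) \<in> snd (Gamma ks c)}"
      unfolding flip by simp
  qed
  then show ?thesis by (simp add: \<beta>_def ks'_def)
qed

theorem lemma5p2:
  fixes ks :: "nat list" and k :: nat and c :: "(nat \<times> nat) list"
  assumes pos: "\<forall>x\<in>set ks. 0 < x"
    and total: "sum_list ks = 2 * k"
    and chord: "chord_diagram k c"
  shows "(\<forall>r<k. G_eq (Gamma ks (act (transpose (fst (c ! r)) (snd (c ! r))) c)) (-1) (Gamma ks c))
       \<and> (\<forall>\<sigma>. \<sigma> permutes {1..2 * k} \<and> (\<forall>t<length ks. \<sigma> ` block ks t = block ks t)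
              \<longrightarrow> G_eq (Gamma ks (act \<sigma> c)) 1 (Gamma ks c))
       \<and> (\<forall>\<sigma>. \<sigma> permutes {..<length ks}
              \<longrightarrow> G_eq (Gamma (permute_list \<sigma> ks) (act (inv (block_perm ks \<sigma>)) c))
                       (of_int (sign \<sigma>)) (Gamma ks c))"
  using part1[OF pos total chord] part2[OF pos total chord] part3[OF pos total chord] by blast

end
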